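(* $\mathfrak{icp}(\mathsf{meager}\setminus\{\emptyset\},\subseteq)=\operatorname{add}(\mathsf{meager})$.
   Context: $\mathsf{meager}$ is the ideal of meager subsets of $2^\omega$, ordered by inclusion. For a poset $(P,\le)$, $F\subseteq P$ is an incomparable family if for every $p\in P$ there is $q\in F$ with $p\not\le q$ and $q\not\le p$; $\mathfrak{icp}(P)$ is the minimal size of an incomparable family. $\operatorname{add}(\mathsf{meager})$ is the minimal size of a family of meager sets whose union is not meager. *)

theory Defs
  imports "HOL-Analysis.Analysis"
begin

definition cantor_space :: "(nat \<Rightarrow> bool) topology" where
  "cantor_space = product_topology (\<lambda>_. discrete_topology (UNIV :: bool set)) UNIV"

definition nowhere_dense_in :: "'a topology \<Rightarrow> 'a set \<Rightarrow> bool" where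
  "nowhere_dense_in X A \<longleftrightarrow> A \<subseteq> topspace X \<and> X interior_of (X closure_of A) = {}"

definition meager_in :: "'a topology \<Rightarrow> 'a set \<Rightarrow> bool" where
  "meager_in X A \<longleftrightarrow> A \<subseteq> topspace X \<and>
     (\<exists>N :: nat \<Rightarrow> 'a set. (\<forall>n. nowhere_dense_in X (N n)) \<and> A \<subseteq> (\<Union>n. N n))"

definition meager :: "(nat \<Rightarrow> bool) set set" where
  "meager = {A. meager_in cantor_space A}"

definition incomparable_family :: "'a set \<Rightarrow> ('a \<Rightarrow> 'a \<Rightarrow> bool) \<Rightarrow> 'a set \<Rightarrow> bool" where
  "incomparable_family P le F \<longleftrightarrow> F \<subseteq> P \<and>
     (\<forall>p\<in>P. \<exists>q\<in>F. \<not> le p q \<and> \<not> le q p)"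

definition icp_is :: "'a set \<Rightarrow> ('a \<Rightarrow> 'a \<Rightarrow> bool) \<Rightarrow> 'b rel \<Rightarrow> bool" where
  "icp_is P le \<kappa> \<longleftrightarrow>
     (\<exists>F. incomparable_family P le F \<and> (card_of F, \<kappa>) \<in> ordIso) \<and>
     (\<forall>F. incomparable_family P le F \<longrightarrow> (\<kappa>, card_of F) \<in> ordLeq)"

definition add_family :: "'a set set \<Rightarrow> 'a set set \<Rightarrow> bool" where
  "add_family I G \<longleftrightarrow> G \<subseteq> I \<and> \<Union>G \<notin> I"

definition add_is :: "'a set set \<Rightarrow> 'b rel \<Rightarrow> bool" where
  "add_is I \<kappa> \<longleftrightarrow>
     (\<exists>G. add_family I G \<and> (card_of G, \<kappa>) \<in> ordIso) \<and>
     (\<forall>G. add_family I G \<longrightarrow> (\<kappa>, card_of G) \<in> ordLeq)"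

end

theory Submission
  imports Defs
begin

lemma topspace_cantor[simp]: "topspace cantor_space = UNIV"
  by (simp add: cantor_space_def topspace_product_topology)

lemma cantor_open:
  "openin cantor_space S \<longleftrightarrow> (\<forall>x\<in>S. \<exists>n. \<forall>y. (\<forall>i<n. y i = x i) \<longrightarrow> y \<in> S)"
proof
  assume "openin cantor_space S"
  show "\<forall>x\<in>S. \<exists>n. \<forall>y. (\<forall>i<n. y i = x i) \<longrightarrow> y \<in> S"
  proof
    fix x assume "x \<in> S"
    then obtain U where fin: "finite {i. U i \<noteq> UNIV}" and xU: "x \<in> Pi\<^sub>E UNIV U"
      and sub: "Pi\<^sub>E UNIV U \<subseteq> S"
      using \<open>openin cantor_space S\<close> unfolding cantor_space_def openin_product_topology_alt
      by auto
    obtain n where n: "\<forall>i\<in>{i. U i \<noteq> UNIV}. i < n"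
      using fin finite_nat_set_iff_bounded by blast
    show "\<exists>n. \<forall>y. (\<forall>i<n. y i = x i) \<longrightarrow> y \<in> S"
    proof (intro exI allI impI)
      fix y assume "\<forall>i<n. y i = x i"
      then have "\<forall>i. y i \<in> U i"
      proof -
        { fix i have "y i \<in> U i"
          proof (cases "i < n")
            case True then show ?thesis using \<open>\<forall>i<n. y i = x i\<close> xU by auto
          next
            case False then show ?thesis using n by auto
          qed }
        then show ?thesis by blast
      qed
      then have "y \<in> Pi\<^sub>E UNIV U" by auto
      then show "y \<in> S" using sub by blast
    qed
  qed
next
  assume H: "\<forall>x\<in>S. \<exists>n. \<forall>y. (\<forall>i<n. y i = x i) \<longrightarrow> y \<in> S"
  show "openin cantor_space S"
    unfolding cantor_space_def openin_product_topology_alt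
  proof
    fix x assume "x \<in> S"
    then obtain n where n: "\<forall>y. (\<forall>i<n. y i = x i) \<longrightarrow> y \<in> S" using H by blast
    define U where "U = (\<lambda>i. if i < n then {x i} else UNIV)"
    have "{i. U i \<noteq> UNIV} \<subseteq> {..<n}" by (auto simp: U_def)
    then have "finite {i \<in> UNIV. U i \<noteq> topspace (discrete_topology UNIV)}"
      by (simp add: finite_subset)
    moreover have "x \<in> Pi\<^sub>E UNIV U" by (auto simp: U_def)
    moreover have "Pi\<^sub>E UNIV U \<subseteq> S"
      using n by (auto simp: U_def PiE_def Pi_def)
    ultimately show "\<exists>U. finite {i \<in> UNIV. U i \<noteq> topspace (discrete_topology UNIV)} \<and>
              (\<forall>i\<in>UNIV. openin (discrete_topology UNIV) (U i)) \<and> x \<in> Pi\<^sub>E UNIV U \<and> Pi\<^sub>E UNIV U \<subseteq> S"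
      by auto
  qed
qed


lemma nd_preimage:
  assumes cont: "continuous_map cantor_space cantor_space f"
    and opn: "\<And>U. openin cantor_space U \<Longrightarrow> openin cantor_space (f ` U)"
    and nd: "nowhere_dense_in cantor_space N"
  shows "nowhere_dense_in cantor_space (f -` N)"
proof -
  let ?X = cantor_space
  let ?P = "f -` N"
  let ?U = "?X interior_of (?X closure_of ?P)"
  have "openin ?X ?U" by simp
  then have o: "openin ?X (f ` ?U)" by (rule opn)
  have "f ` ?U \<subseteq> f ` (?X closure_of ?P)" by (rule image_mono[OF interior_of_subset])
  also have "\<dots> \<subseteq> ?X closure_of (f ` ?P)" using continuous_map_image_closure_subset[OF cont] .
  also have "\<dots> \<subseteq> ?X closure_of N" by (rule closure_of_mono[OF image_vimage_subset])
  finally have "f ` ?U \<subseteq> ?X interior_of (?X closure_of N)" using o interior_of_maximal by blast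
  then have "f ` ?U = {}" using nd unfolding nowhere_dense_in_def by blast
  then show ?thesis unfolding nowhere_dense_in_def by auto
qed

lemma meager_preimage:
  assumes cont: "continuous_map cantor_space cantor_space f"
    and opn: "\<And>U. openin cantor_space U \<Longrightarrow> openin cantor_space (f ` U)"
    and m: "meager_in cantor_space A"
  shows "meager_in cantor_space (f -` A)"
proof -
  from m have "\<exists>N. (\<forall>n::nat. nowhere_dense_in cantor_space (N n)) \<and> A \<subseteq> (\<Union>n. N n)"
    unfolding meager_in_def by (rule conjunct2)
  then obtain N :: "nat \<Rightarrow> (nat \<Rightarrow> bool) set" where N1: "\<And>n. nowhere_dense_in cantor_space (N n)" and N2: "A \<subseteq> (\<Union>n. N n)"
    by blast
  have P1: "\<And>n. nowhere_dense_in cantor_space (f -` N n)" by (rule nd_preimage[OF cont opn N1])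
  have P2: "f -` A \<subseteq> (\<Union>n. f -` N n)" using N2 by blast
  have "(\<forall>n::nat. nowhere_dense_in cantor_space (f -` N n)) \<and> f -` A \<subseteq> (\<Union>n. f -` N n)"
    using P1 P2 by blast
  then have "\<exists>N. (\<forall>n::nat. nowhere_dense_in cantor_space (N n)) \<and> f -` A \<subseteq> (\<Union>n. N n)"
    by (rule exI[of _ "\<lambda>n. f -` N n"])
  then show ?thesis unfolding meager_in_def by simp
qed

lemma meager_mono: "meager_in cantor_space A \<Longrightarrow> B \<subseteq> A \<Longrightarrow> meager_in cantor_space B"
  unfolding meager_in_def by blast

lemma meager_countable_Union:
  fixes A :: "nat \<Rightarrow> (nat \<Rightarrow> bool) set"
  assumes "\<And>n. meager_in cantor_space (A n)"
  shows "meager_in cantor_space (\<Union>n. A n)"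
proof -
  have "\<forall>n. \<exists>N. (\<forall>m::nat. nowhere_dense_in cantor_space (N m)) \<and> A n \<subseteq> (\<Union>m. N m)"
    using assms unfolding meager_in_def by blast
  then have "\<exists>N. \<forall>n. (\<forall>m::nat. nowhere_dense_in cantor_space (N n m)) \<and> A n \<subseteq> (\<Union>m. N n m)"
    by (rule choice)
  then obtain N :: "nat \<Rightarrow> nat \<Rightarrow> (nat \<Rightarrow> bool) set" where N0: "\<forall>n. (\<forall>m::nat. nowhere_dense_in cantor_space (N n m)) \<and> A n \<subseteq> (\<Union>m. N n m)"
    by blast
  then have N: "\<And>n m. nowhere_dense_in cantor_space (N n m)" "\<And>n. A n \<subseteq> (\<Union>m. N n m)"
    by blast+
  define M where "M k = N (fst (prod_decode k)) (snd (prod_decode k))" for k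
  have "\<forall>k. nowhere_dense_in cantor_space (M k)" using N(1) by (simp add: M_def)
  moreover have "(\<Union>n. A n) \<subseteq> (\<Union>k. M k)"
  proof
    fix x assume "x \<in> (\<Union>n. A n)"
    then obtain n m where "x \<in> N n m" using N(2) by blast
    then have "x \<in> M (prod_encode (n, m))" by (simp add: M_def)
    then show "x \<in> (\<Union>k. M k)" by blast
  qed
  ultimately show ?thesis unfolding meager_in_def
    by (intro conjI exI[of _ M]) simp_all
qed

lemma meager_empty: "meager_in cantor_space {}"
  unfolding meager_in_def nowhere_dense_in_def
  by (rule conjI, simp, rule exI[of _ "\<lambda>_. {}"]) simp

lemma meager_countable_family:
  assumes "countable G" "G \<subseteq> meager"
  shows "\<Union>G \<in> meager"
proof (cases "G = {}")
  case True then show ?thesis using meager_empty by (simp add: meager_def)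
next
  case False
  define g where "g = from_nat_into G"
  have g: "G = range g" using range_from_nat_into[OF False assms(1)] by (simp add: g_def)
  then have "\<And>n. meager_in cantor_space (g n)" using assms(2) by (auto simp: meager_def)
  then have "meager_in cantor_space (\<Union>n. g n)" by (rule meager_countable_Union)
  then show ?thesis using g by (simp add: meager_def)
qed

lemma cantor_not_meager: "\<not> meager_in cantor_space UNIV"
proof
  assume "meager_in cantor_space UNIV"
  then have "\<exists>N. (\<forall>n::nat. nowhere_dense_in cantor_space (N n)) \<and> UNIV \<subseteq> (\<Union>n. N n)"
    unfolding meager_in_def by (rule conjunct2)
  then obtain N :: "nat \<Rightarrow> (nat \<Rightarrow> bool) set" where N: "\<forall>n::nat. nowhere_dense_in cantor_space (N n)" "UNIV \<subseteq> (\<Union>n. N n)"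
    by blast
  have cs: "compact_space cantor_space" unfolding cantor_space_def
    by (rule iffD2[OF compact_space_product_topology], rule disjI2, simp add: compact_space_discrete_topology)
  have hs: "Hausdorff_space cantor_space" unfolding cantor_space_def
    by (rule iffD2[OF Hausdorff_space_product_topology], rule disjI2, simp)
  have "cantor_space interior_of \<Union>(range (\<lambda>n. cantor_space closure_of N n)) = {}"
  proof (rule Baire_category_alt)
    show "completely_metrizable_space cantor_space \<or> locally_compact_space cantor_space \<and> regular_space cantor_space"
      using compact_imp_locally_compact_space[OF cs] compact_Hausdorff_imp_regular_space[OF cs hs] by blast
    show "countable (range (\<lambda>n. cantor_space closure_of N n))" by simp
    fix T assume "T \<in> range (\<lambda>n. cantor_space closure_of N n)"
    then show "closedin cantor_space T \<and> cantor_space interior_of T = {}"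
    proof -
      from \<open>T \<in> _\<close> obtain n where T: "T = cantor_space closure_of N n" by blast
      then show ?thesis using N(1) unfolding nowhere_dense_in_def by simp
    qed
  qed
  moreover have "\<Union>(range (\<lambda>n. cantor_space closure_of N n)) = UNIV"
  proof -
    have *: "\<And>n. N n \<subseteq> cantor_space closure_of N n" by (rule closure_of_subset) simp
    have "UNIV \<subseteq> (\<Union>n. cantor_space closure_of N n)"
    proof
      fix x :: "nat \<Rightarrow> bool"
      from N(2) obtain n where "x \<in> N n" by blast
      with * have "x \<in> cantor_space closure_of N n" by blast
      then show "x \<in> (\<Union>n. cantor_space closure_of N n)" by blast
    qed
    then show ?thesis by (simp add: top.extremum_unique)
  qed
  moreover have "cantor_space interior_of UNIV = UNIV"
    using interior_of_topspace[of cantor_space] by simp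
  ultimately show False by simp
qed

lemma case_nat_shift: "case_nat (w 0) (\<lambda>n. w (Suc n)) = w"
  by (auto simp: fun_eq_iff split: nat.split)

lemma shift_cont: "continuous_map cantor_space cantor_space (\<lambda>x n. x (Suc n))"
  unfolding continuous_map_def
proof (intro conjI allI impI)
  show "(\<lambda>x n. x (Suc n)) \<in> topspace cantor_space \<rightarrow> topspace cantor_space" by simp
  fix U assume U: "openin cantor_space U"
  show "openin cantor_space {x \<in> topspace cantor_space. (\<lambda>n. x (Suc n)) \<in> U}"
    unfolding cantor_open
  proof (intro ballI)
    fix x assume "x \<in> {x \<in> topspace cantor_space. (\<lambda>n. x (Suc n)) \<in> U}"
    then have "(\<lambda>n. x (Suc n)) \<in> U" by simp
    with U[unfolded cantor_open] have "\<exists>n. \<forall>y. (\<forall>i<n. y i = x (Suc i)) \<longrightarrow> y \<in> U"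
      by (rule bspec)
    then obtain n where n: "\<And>y. (\<forall>i<n. y i = x (Suc i)) \<Longrightarrow> y \<in> U"
      by blast
    show "\<exists>n. \<forall>y. (\<forall>i<n. y i = x i) \<longrightarrow> y \<in> {x \<in> topspace cantor_space. (\<lambda>n. x (Suc n)) \<in> U}"
    proof (intro exI[of _ "Suc n"] allI impI)
      fix y assume "\<forall>i<Suc n. y i = x i"
      then have "(\<lambda>i. y (Suc i)) \<in> U" by (intro n) simp
      then show "y \<in> {x \<in> topspace cantor_space. (\<lambda>n. x (Suc n)) \<in> U}" by simp
    qed
  qed
qed

lemma shift_open:
  assumes U: "openin cantor_space U"
  shows "openin cantor_space ((\<lambda>x n. x (Suc n)) ` U)"
  unfolding cantor_open
proof (intro ballI)
  fix z assume "z \<in> (\<lambda>x n. x (Suc n)) ` U"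
  then obtain x where x: "x \<in> U" "z = (\<lambda>n. x (Suc n))" by blast
  then obtain n where n: "\<And>y. (\<forall>i<n. y i = x i) \<Longrightarrow> y \<in> U"
    using U unfolding cantor_open by blast
  show "\<exists>n. \<forall>y. (\<forall>i<n. y i = z i) \<longrightarrow> y \<in> (\<lambda>x n. x (Suc n)) ` U"
  proof (intro exI[of _ n] allI impI)
    fix w assume w: "\<forall>i<n. w i = z i"
    have "case_nat (x 0) w \<in> U"
    proof (rule n, intro allI impI)
      fix i assume "i < n"
      then show "case_nat (x 0) w i = x i" using w x(2) by (cases i) auto
    qed
    moreover have "w = (\<lambda>n. case_nat (x 0) w (Suc n))" by simp
    ultimately show "w \<in> (\<lambda>x n. x (Suc n)) ` U" by blast
  qed
qed

lemma cons_cont: "continuous_map cantor_space cantor_space (case_nat b)"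
  unfolding continuous_map_def
proof (intro conjI allI impI)
  show "case_nat b \<in> topspace cantor_space \<rightarrow> topspace cantor_space" by simp
  fix U assume U: "openin cantor_space U"
  show "openin cantor_space {x \<in> topspace cantor_space. case_nat b x \<in> U}"
    unfolding cantor_open
  proof (intro ballI)
    fix x assume "x \<in> {x \<in> topspace cantor_space. case_nat b x \<in> U}"
    then have "case_nat b x \<in> U" by simp
    then obtain n where n: "\<And>y. (\<forall>i<n. y i = case_nat b x i) \<Longrightarrow> y \<in> U"
      using U unfolding cantor_open by blast
    show "\<exists>n. \<forall>y. (\<forall>i<n. y i = x i) \<longrightarrow> y \<in> {x \<in> topspace cantor_space. case_nat b x \<in> U}"
    proof (intro exI[of _ n] allI impI)
      fix y assume y: "\<forall>i<n. y i = x i"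
      have "case_nat b y \<in> U"
      proof (rule n, intro allI impI)
        fix i assume "i < n"
        then show "case_nat b y i = case_nat b x i" using y by (cases i) auto
      qed
      then show "y \<in> {x \<in> topspace cantor_space. case_nat b x \<in> U}" by simp
    qed
  qed
qed

lemma cons_open:
  assumes U: "openin cantor_space U"
  shows "openin cantor_space (case_nat b ` U)"
  unfolding cantor_open
proof (intro ballI)
  fix z assume "z \<in> case_nat b ` U"
  then obtain x where x: "x \<in> U" "z = case_nat b x" by blast
  then obtain n where n: "\<And>y. (\<forall>i<n. y i = x i) \<Longrightarrow> y \<in> U"
    using U unfolding cantor_open by blast
  show "\<exists>n. \<forall>y. (\<forall>i<n. y i = z i) \<longrightarrow> y \<in> case_nat b ` U"
  proof (intro exI[of _ "Suc n"] allI impI)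
    fix w assume w: "\<forall>i<Suc n. w i = z i"
    have "(\<lambda>i. w (Suc i)) \<in> U"
    proof (rule n, intro allI impI)
      fix i assume "i < n"
      then show "w (Suc i) = x i" using w x(2) by auto
    qed
    moreover have "w = case_nat b (\<lambda>i. w (Suc i))"
    proof -
      have "w 0 = b" using w x(2) by auto
      then show ?thesis using case_nat_shift[of w] by simp
    qed
    ultimately show "w \<in> case_nat b ` U" by blast
  qed
qed

lemma singleton_meager: "meager_in cantor_space {x}"
proof -
  have cl: "closedin cantor_space {x}"
    unfolding closedin_def
  proof (intro conjI)
    show "{x} \<subseteq> topspace cantor_space" by simp
    show "openin cantor_space (topspace cantor_space - {x})"
      unfolding cantor_open
    proof (intro ballI)
      fix y assume "y \<in> topspace cantor_space - {x}"
      then have "y \<noteq> x" by simp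
      then obtain i where i: "y i \<noteq> x i" by (auto simp: fun_eq_iff)
      show "\<exists>n. \<forall>z. (\<forall>i<n. z i = y i) \<longrightarrow> z \<in> topspace cantor_space - {x}"
      proof (intro exI[of _ "Suc i"] allI impI)
        fix z assume "\<forall>j<Suc i. z j = y j"
        then have "z i = y i" by simp
        then have "z \<noteq> x" using i by auto
        then show "z \<in> topspace cantor_space - {x}" by simp
      qed
    qed
  qed
  have int: "cantor_space interior_of {x} = {}"
    unfolding interior_of_eq_empty
  proof (intro allI impI)
    fix T assume T: "openin cantor_space T \<and> T \<subseteq> {x}"
    show "T = {}"
    proof (rule ccontr)
      assume "T \<noteq> {}"
      then have "x \<in> T" using T by blast
      then obtain n where n: "\<And>y. (\<forall>i<n. y i = x i) \<Longrightarrow> y \<in> T"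
        using T unfolding cantor_open by blast
      have "x(n := \<not> x n) \<in> T" by (rule n) simp
      moreover have "x(n := \<not> x n) \<noteq> x" by (auto simp: fun_eq_iff)
      ultimately show False using T by blast
    qed
  qed
  have "nowhere_dense_in cantor_space {x}"
    unfolding nowhere_dense_in_def using cl int closure_of_eq[of cantor_space "{x}"] by simp
  then show ?thesis unfolding meager_in_def
    by (intro conjI exI[of _ "\<lambda>_::nat. {x}"]) simp_all
qed

lemma exists_add_family: "\<exists>G. add_family meager G"
proof -
  let ?G = "(\<lambda>x. {x}) ` (UNIV :: (nat \<Rightarrow> bool) set)"
  have "?G \<subseteq> meager" using singleton_meager by (auto simp: meager_def)
  moreover have "\<Union>?G = UNIV" by auto
  ultimately have "add_family meager ?G"
    unfolding add_family_def using cantor_not_meager by (simp add: meager_def)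
  then show ?thesis by blast
qed

lemma cons_meager: "M \<in> meager \<Longrightarrow> case_nat b ` M \<in> meager"
proof -
  assume "M \<in> meager"
  then have "meager_in cantor_space ((\<lambda>x n. x (Suc n)) -` M)"
    using meager_preimage[OF shift_cont shift_open] by (simp add: meager_def)
  moreover have "case_nat b ` M \<subseteq> (\<lambda>x n. x (Suc n)) -` M" by auto
  ultimately show ?thesis using meager_mono by (simp add: meager_def)
qed

lemma cons_preimage_meager: "p \<in> meager \<Longrightarrow> case_nat b -` p \<in> meager"
  using meager_preimage[OF cons_cont cons_open] by (simp add: meager_def)

theorem mainTheorem15:
  shows "\<exists>\<kappa> :: (nat \<Rightarrow> bool) set set rel.
           icp_is (meager - {{}}) (\<subseteq>) \<kappa> \<and> add_is meager \<kappa>"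
proof -
  define P where "P = meager - {{}}"
  let ?R = "card_of ` {G. add_family meager G}"
  obtain Ge where Ge: "add_family meager Ge" using exists_add_family by blast
  have ne: "?R \<noteq> {}" using Ge by auto
  have cards: "\<forall>r\<in>?R. Card_order r" by (auto simp: card_of_Card_order)
  obtain r where r: "r \<in> ?R" "\<forall>r'\<in>?R. (r, r') \<in> ordLeq"
    using exists_minim_Card_order[OF ne cards] by blast
  then obtain G0 where G0: "add_family meager G0" "r = card_of G0" by blast
  have minG0: "(card_of G0, card_of G) \<in> ordLeq" if "add_family meager G" for G
    using r(2) G0(2) that by simp
  have small: "\<Union>F \<in> meager" if "F \<subseteq> meager" "(card_of F, card_of G0) \<in> ordLess" for F
  proof (rule ccontr)
    assume "\<Union>F \<notin> meager"
    then have "add_family meager F" using that(1) unfolding add_family_def by blast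
    then have "(card_of G0, card_of F) \<in> ordLeq" by (rule minG0)
    then show False using not_ordLess_ordLeq[OF that(2)] by blast
  qed
  obtain x0 :: "nat \<Rightarrow> bool" where True by blast
  have x0P: "{x0} \<in> P" unfolding P_def using singleton_meager by (simp add: meager_def)
  have lower: "(card_of G0, card_of F) \<in> ordLeq" if F: "incomparable_family P (\<subseteq>) F" for F
  proof (rule ccontr)
    assume "(card_of G0, card_of F) \<notin> ordLeq"
    then have lt: "(card_of F, card_of G0) \<in> ordLess"
      using not_ordLeq_iff_ordLess[OF card_of_Well_order card_of_Well_order] by blast
    have FP: "F \<subseteq> P" using F unfolding incomparable_family_def by blast
    then have "F \<subseteq> meager" unfolding P_def by blast
    then have U: "\<Union>F \<in> meager" using small lt by blast
    from F x0P obtain q where q: "q \<in> F" unfolding incomparable_family_def by blast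
    then have "q \<noteq> {}" using FP unfolding P_def by blast
    then have "\<Union>F \<noteq> {}" using q by blast
    then have "\<Union>F \<in> P" using U unfolding P_def by blast
    then obtain q' where q': "q' \<in> F" "\<not> \<Union>F \<subseteq> q'" "\<not> q' \<subseteq> \<Union>F"
      using F unfolding incomparable_family_def by blast
    then show False by blast
  qed
  have inf: "infinite G0"
  proof
    assume "finite G0"
    then have "countable G0" by (rule countable_finite)
    moreover have "G0 \<subseteq> meager" using G0(1) unfolding add_family_def by blast
    ultimately have "\<Union>G0 \<in> meager" by (rule meager_countable_family)
    then show False using G0(1) unfolding add_family_def by blast
  qed
  define G1 where "G1 = G0 - {{}}"
  have G1m: "G1 \<subseteq> meager" using G0(1) unfolding add_family_def G1_def by blast
  have G1U: "\<Union>G1 \<notin> meager"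
  proof -
    have "\<Union>G1 = \<Union>G0" unfolding G1_def by blast
    then show ?thesis using G0(1) unfolding add_family_def by simp
  qed
  define F where "F = (\<lambda>M. case_nat False ` M) ` G1 \<union> (\<lambda>M. case_nat True ` M) ` G1"
  have FP: "F \<subseteq> P"
  proof
    fix q assume "q \<in> F"
    then obtain M b where M: "M \<in> G1" "q = case_nat b ` M" unfolding F_def by blast
    then have "q \<in> meager" using G1m cons_meager by blast
    moreover have "q \<noteq> {}" using M unfolding G1_def by blast
    ultimately show "q \<in> P" unfolding P_def by blast
  qed
  have ex: "\<exists>M\<in>G1. \<not> case_nat b ` M \<subseteq> p" if "p \<in> meager" for p b
  proof (rule ccontr)
    assume "\<not> (\<exists>M\<in>G1. \<not> case_nat b ` M \<subseteq> p)"
    then have "\<Union>G1 \<subseteq> case_nat b -` p" by blast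
    moreover have "case_nat b -` p \<in> meager" using that by (rule cons_preimage_meager)
    ultimately have "\<Union>G1 \<in> meager" using meager_mono by (simp add: meager_def)
    then show False using G1U by blast
  qed
  have incF: "incomparable_family P (\<subseteq>) F"
    unfolding incomparable_family_def
  proof (intro conjI ballI)
    show "F \<subseteq> P" by (rule FP)
    fix p assume pP: "p \<in> P"
    then have pm: "p \<in> meager" and pne: "p \<noteq> {}" unfolding P_def by blast+
    obtain M0 where M0: "M0 \<in> G1" "\<not> case_nat False ` M0 \<subseteq> p" using ex[OF pm] by blast
    obtain M1 where M1: "M1 \<in> G1" "\<not> case_nat True ` M1 \<subseteq> p" using ex[OF pm] by blast
    have F0: "case_nat False ` M0 \<in> F" using M0(1) unfolding F_def by blast
    have F1: "case_nat True ` M1 \<in> F" using M1(1) unfolding F_def by blast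
    have "\<not> (p \<subseteq> case_nat False ` M0 \<and> p \<subseteq> case_nat True ` M1)"
    proof
      assume H: "p \<subseteq> case_nat False ` M0 \<and> p \<subseteq> case_nat True ` M1"
      obtain y where y: "y \<in> p" using pne by blast
      then have y1: "y \<in> case_nat False ` M0" and y2: "y \<in> case_nat True ` M1" using H by blast+
      from y1 obtain a where "y = case_nat False a" by blast
      then have "y 0 = False" by simp
      moreover from y2 obtain c where "y = case_nat True c" by blast
      then have "y 0 = True" by simp
      ultimately show False by simp
    qed
    then show "\<exists>q\<in>F. \<not> p \<subseteq> q \<and> \<not> q \<subseteq> p"
      using F0 F1 M0(2) M1(2) by blast
  qed
  have le1: "(card_of G0, card_of F) \<in> ordLeq" using lower[OF incF] .
  have G1G0: "(card_of G1, card_of G0) \<in> ordLeq"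
    by (rule card_of_mono1) (simp add: G1_def)
  have "(card_of ((\<lambda>M. case_nat b ` M) ` G1), card_of G0) \<in> ordLeq" for b
    by (rule ordLeq_transitive[OF card_of_image G1G0])
  then have le2: "(card_of F, card_of G0) \<in> ordLeq"
    unfolding F_def
    by (intro card_of_Un_ordLeq_infinite_Field) (simp_all add: Field_card_of inf card_of_Card_order card_of_card_order_on)
  have iso: "(card_of F, card_of G0) \<in> ordIso" using le1 le2 ordIso_iff_ordLeq by blast
  define K where "K = (\<lambda>M. {M}) ` G0"
  have "bij_betw (\<lambda>M. {M}) G0 K" unfolding K_def by (rule inj_on_imp_bij_betw) (simp add: inj_on_def)
  then have GK: "(card_of G0, card_of K) \<in> ordIso" using card_of_ordIso by blast
  then have KG: "(card_of K, card_of G0) \<in> ordIso" by (rule ordIso_symmetric)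
  have "icp_is P (\<subseteq>) (card_of K)"
    unfolding icp_is_def
  proof (intro conjI allI impI)
    show "\<exists>F. incomparable_family P (\<subseteq>) F \<and> (card_of F, card_of K) \<in> ordIso"
      using incF ordIso_transitive[OF iso GK] by blast
    fix F' assume "incomparable_family P (\<subseteq>) F'"
    then show "(card_of K, card_of F') \<in> ordLeq" using ordIso_ordLeq_trans[OF KG lower] by blast
  qed
  moreover have "add_is meager (card_of K)"
    unfolding add_is_def
  proof (intro conjI allI impI)
    show "\<exists>G. add_family meager G \<and> (card_of G, card_of K) \<in> ordIso"
      using G0(1) GK by blast
    fix G assume "add_family meager G"
    then show "(card_of K, card_of G) \<in> ordLeq" using ordIso_ordLeq_trans[OF KG minG0] by blast
  qed
  ultimately show ?thesis unfolding P_def by blast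
qed

end
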